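(* In the setting described in the context: if $(\Gamma,u,y,z)$ satisfies (P1) $\alpha_{ij}\hat{x}_j+u_{ij}\ge0$ and $-\alpha_{ij}\hat{x}_j+u_{ij}\ge0$ for all $j\in J_i,i\in I$; (P2) $y_{ij}+z_i\ge u_{ij}$ for all $j\in J_i,i\in I$; (P3) $\sum_{j\in J}a_{ij}\hat{x}_j-\sum_{j\in J_i}y_{ij}-\Gamma_iz_i\ge b_i$ for all $i\in I$; (P4) $y_{ij}\ge0$, $z_i\ge0$ for all $j\in J_i,i\in I$; (P5) $0\le\Gamma_i\le|J_i|$ for all $i\in I$, then $\Gamma\in\Theta$. Conversely, if $\sum_{j\in J}a_{ij}\hat{x}_j\ge b_i$ for all $i\in I$ and $\Gamma\in\Theta$, then there exists $(u,y,z)$ such that $(\Gamma,u,y,z)$ satisfies (P1)–(P5).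
   Context: Let $I=\{1,\dots,m\}$, $J=\{1,\dots,n\}$. Given are $a_{ij}\in\mathbb{R}$ ($i\in I,j\in J$), $b\in\mathbb{R}^m$, index sets $J_i\subseteq J$, nonnegative numbers $\alpha_{ij}$ ($j\in J_i,i\in I$), and an observed point $\hat{x}\in\mathbb{R}^n$. For $i\in I$ and $x\in\mathbb{R}^n$ let $j^i_1(x),\dots,j^i_{|J_i|}(x)$ be an ordering of $J_i$ such that $\alpha_{ij^i_k(x)}|x_{j^i_k(x)}|$ is the $k$-th largest element of $\{\alpha_{ij}|x_j|\}_{j\in J_i}$. For $\Gamma_i\in[0,|J_i|]$ define the protection value \[ P_i(\Gamma_i,x)=\sum_{k=1}^{\lfloor\Gamma_i\rfloor}\alpha_{ij^i_k(x)}|x_{j^i_k(x)}|+(\Gamma_i-\lfloor\Gamma_i\rfloor)\alpha_{ij^i_{\lceil\Gamma_i\rceil}(x)}|x_{j^i_{\lceil\Gamma_i\rceil}(x)}| \] (the last term being $0$ when $\Gamma_i$ is an integer). Let $s_i=\sum_{j\in J}a_{ij}\hat{x}_j-b_i$ and $\hat{I}=\{i\in I:0\le s_i\le\sum_{j\in J_i}\alpha_{ij}|\hat{x}_j|\}$. For $i\in\hat{I}$ let $\underline{\Gamma}_i=\min\{\sum_{j\in J_i}w_j: \sum_{j\in J_i}\alpha_{ij}|\hat{x}_j|w_j=s_i,\ 0\le w_j\le1\}$; it satisfies $s_i=P_i(\underline{\Gamma}_i,\hat{x})$. Standing assumption: for each $i\in\hat{I}$, $\underline{\Gamma}_i$ is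 the unique $\Gamma_i\in[0,|J_i|]$ with $s_i=P_i(\Gamma_i,\hat{x})$. Define $\Theta=\{\Gamma\in\mathbb{R}^m:\Gamma_i\in[0,\underline{\Gamma}_i]\ \forall i\in\hat{I};\ \Gamma_i\in[0,|J_i|]\ \forall i\in I\setminus\hat{I}\}$. The variables $u_{ij},y_{ij}$ ($j\in J_i,i\in I$), $z_i$ ($i\in I$), $\Gamma\in\mathbb{R}^m$ are real. *)

theory Defs
  imports Complex_Main
begin

text \<open>Index sets: I = {1..m}, J = {1..n}. Data are functions on naturals,
  only their values on the relevant index sets matter.
  Jset i is J_i, al i j is alpha_ij.\<close>

text \<open>Values alpha_ij |x_j| (j in J_i) sorted in non-increasing order;
  the k-th largest (k = 1,2,...) is at list position k-1.\<close>
definition sorted_vals :: "(nat \<Rightarrow> nat set) \<Rightarrow> (nat \<Rightarrow> nat \<Rightarrow> real) \<Rightarrow> nat \<Rightarrow> (nat \<Rightarrow> real) \<Rightarrow> real list" where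
  "sorted_vals Jset al i x =
     rev (sort (map (\<lambda>j. al i j * \<bar>x j\<bar>) (sorted_list_of_set (Jset i))))"

text \<open>Protection value P_i(G, x).  The fractional term is multiplied by
  G - floor G, hence is 0 when G is an integer.\<close>
definition protection :: "(nat \<Rightarrow> nat set) \<Rightarrow> (nat \<Rightarrow> nat \<Rightarrow> real) \<Rightarrow> nat \<Rightarrow> real \<Rightarrow> (nat \<Rightarrow> real) \<Rightarrow> real" where
  "protection Jset al i G x =
     (let vs = sorted_vals Jset al i x in
       (\<Sum>k<nat \<lfloor>G\<rfloor>. vs ! k) + (G - of_int \<lfloor>G\<rfloor>) * vs ! (nat \<lceil>G\<rceil> - 1))"

definition slack :: "nat \<Rightarrow> (nat \<Rightarrow> nat \<Rightarrow> real) \<Rightarrow> (nat \<Rightarrow> real) \<Rightarrow> (nat \<Rightarrow> real) \<Rightarrow> nat \<Rightarrow> real" where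
  "slack n a b xh i = (\<Sum>j\<in>{1..n}. a i j * xh j) - b i"

definition Ihat :: "nat \<Rightarrow> nat \<Rightarrow> (nat \<Rightarrow> nat \<Rightarrow> real) \<Rightarrow> (nat \<Rightarrow> real) \<Rightarrow> (nat \<Rightarrow> nat set) \<Rightarrow> (nat \<Rightarrow> nat \<Rightarrow> real) \<Rightarrow> (nat \<Rightarrow> real) \<Rightarrow> nat set" where
  "Ihat m n a b Jset al xh =
     {i\<in>{1..m}. 0 \<le> slack n a b xh i \<and> slack n a b xh i \<le> (\<Sum>j\<in>Jset i. al i j * \<bar>xh j\<bar>)}"

text \<open>Gamma-underbar: the minimum of the LP (the feasible set is compact and,
  for i in Ihat, nonempty, so the infimum is attained).\<close>
definition Gamma_low :: "nat \<Rightarrow> (nat \<Rightarrow> nat \<Rightarrow> real) \<Rightarrow> (nat \<Rightarrow> real) \<Rightarrow> (nat \<Rightarrow> nat set) \<Rightarrow> (nat \<Rightarrow> nat \<Rightarrow> real) \<Rightarrow> (nat \<Rightarrow> real) \<Rightarrow> nat \<Rightarrow> real" where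
  "Gamma_low n a b Jset al xh i =
     Inf {(\<Sum>j\<in>Jset i. w j) | w :: nat \<Rightarrow> real.
            (\<Sum>j\<in>Jset i. al i j * \<bar>xh j\<bar> * w j) = slack n a b xh i \<and>
            (\<forall>j\<in>Jset i. 0 \<le> w j \<and> w j \<le> 1)}"

definition Theta :: "nat \<Rightarrow> nat \<Rightarrow> (nat \<Rightarrow> nat \<Rightarrow> real) \<Rightarrow> (nat \<Rightarrow> real) \<Rightarrow> (nat \<Rightarrow> nat set) \<Rightarrow> (nat \<Rightarrow> nat \<Rightarrow> real) \<Rightarrow> (nat \<Rightarrow> real) \<Rightarrow> (nat \<Rightarrow> real) set" where
  "Theta m n a b Jset al xh =
     {G. (\<forall>i\<in>Ihat m n a b Jset al xh. 0 \<le> G i \<and> G i \<le> Gamma_low n a b Jset al xh i) \<and>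
         (\<forall>i\<in>{1..m} - Ihat m n a b Jset al xh. 0 \<le> G i \<and> G i \<le> real (card (Jset i)))}"

definition feasible :: "nat \<Rightarrow> nat \<Rightarrow> (nat \<Rightarrow> nat \<Rightarrow> real) \<Rightarrow> (nat \<Rightarrow> real) \<Rightarrow> (nat \<Rightarrow> nat set) \<Rightarrow> (nat \<Rightarrow> nat \<Rightarrow> real) \<Rightarrow> (nat \<Rightarrow> real)
    \<Rightarrow> (nat \<Rightarrow> real) \<Rightarrow> (nat \<Rightarrow> nat \<Rightarrow> real) \<Rightarrow> (nat \<Rightarrow> nat \<Rightarrow> real) \<Rightarrow> (nat \<Rightarrow> real) \<Rightarrow> bool" where
  "feasible m n a b Jset al xh G u y z \<longleftrightarrow>
     (\<forall>i\<in>{1..m}. \<forall>j\<in>Jset i. al i j * xh j + u i j \<ge> 0 \<and> - al i j * xh j + u i j \<ge> 0) \<and>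
     (\<forall>i\<in>{1..m}. \<forall>j\<in>Jset i. y i j + z i \<ge> u i j) \<and>
     (\<forall>i\<in>{1..m}. (\<Sum>j\<in>{1..n}. a i j * xh j) - (\<Sum>j\<in>Jset i. y i j) - G i * z i \<ge> b i) \<and>
     (\<forall>i\<in>{1..m}. (\<forall>j\<in>Jset i. y i j \<ge> 0) \<and> z i \<ge> 0) \<and>
     (\<forall>i\<in>{1..m}. 0 \<le> G i \<and> G i \<le> real (card (Jset i)))"

end

theory Submission imports Defs "HOL-Analysis.Lipschitz" begin
definition Pl :: "real list \<Rightarrow> real \<Rightarrow> real" where
  "Pl L G = (\<Sum>k<nat \<lfloor>G\<rfloor>. L ! k) + (G - of_int \<lfloor>G\<rfloor>) * L ! (nat \<lceil>G\<rceil> - 1)"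

definition Dl :: "real list \<Rightarrow> real \<Rightarrow> real \<Rightarrow> real" where
  "Dl L G t = G * t + (\<Sum>k<length L. max 0 (L ! k - t))"

lemma Pl_lt:
  assumes "0 \<le> G" "nat \<lfloor>G\<rfloor> < length L"
  shows "Pl L G = (\<Sum>k<nat \<lfloor>G\<rfloor>. L ! k) + (G - of_int \<lfloor>G\<rfloor>) * L ! (nat \<lfloor>G\<rfloor>)"
proof (cases "G = of_int \<lfloor>G\<rfloor>")
  case True then show ?thesis unfolding Pl_def by simp
next
  case False
  then have "\<lceil>G\<rceil> = \<lfloor>G\<rfloor> + 1" by (simp add: ceiling_altdef)
  moreover have "\<lfloor>G\<rfloor> \<ge> 0" using assms by simp
  ultimately have "nat \<lceil>G\<rceil> - 1 = nat \<lfloor>G\<rfloor>" by simp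
  then show ?thesis unfolding Pl_def by simp
qed

lemma Pl_N: "Pl L (real (length L)) = (\<Sum>k<length L. L ! k)"
  unfolding Pl_def by simp

lemma Pl_0: "Pl L 0 = 0"
  unfolding Pl_def by simp

lemma range_cases:
  assumes "0 \<le> G" "G \<le> real N"
  shows "nat \<lfloor>G\<rfloor> < N \<or> G = real N"
proof (rule ccontr)
  assume neg: "\<not> ?thesis"
  then have "nat \<lfloor>G\<rfloor> \<ge> N" by simp
  moreover have "\<lfloor>G\<rfloor> \<ge> 0" using assms by simp
  ultimately have "\<lfloor>G\<rfloor> \<ge> int N" by linarith
  then have "G \<ge> real N" by linarith
  then show False using assms neg by simp
qed

lemma Pl_le_Dl:
  assumes "0 \<le> G" "G \<le> real (length L)"
  shows "Pl L G \<le> Dl L G t"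
  using range_cases[OF assms]
proof
  assume "G = real (length L)"
  moreover have "(\<Sum>k<length L. L ! k) \<le> (\<Sum>k<length L. t + max 0 (L ! k - t))"
    by (intro sum_mono) auto
  ultimately show ?thesis unfolding Dl_def
    by (simp add: Pl_N sum.distrib)
next
  define f where "f = nat \<lfloor>G\<rfloor>"
  define r where "r = G - of_int \<lfloor>G\<rfloor>"
  assume f: "nat \<lfloor>G\<rfloor> < length L"
  have r01: "0 \<le> r" "r \<le> 1" unfolding r_def by linarith+
  have Gfr: "G = real f + r" unfolding f_def r_def using assms by simp
  let ?m = "\<lambda>k. max 0 (L ! k - t)"
  have "Pl L G = (\<Sum>k<f. L ! k) + r * L ! f" unfolding f_def r_def using Pl_lt[OF assms(1) f] by simp
  also have "\<dots> \<le> (\<Sum>k<f. t + ?m k) + r * (t + ?m f)"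
    by (intro add_mono sum_mono mult_left_mono r01) auto
  also have "\<dots> = real f * t + r * t + ((\<Sum>k<f. ?m k) + r * ?m f)"
    by (simp add: sum.distrib algebra_simps)
  also have "\<dots> \<le> G * t + ((\<Sum>k<f. ?m k) + ?m f)"
    using r01 by (simp add: Gfr algebra_simps mult_left_le_one_le)
  also have "(\<Sum>k<f. ?m k) + ?m f = (\<Sum>k<Suc f. ?m k)" by simp
  also have "\<dots> \<le> (\<Sum>k<length L. ?m k)"
    using f by (intro sum_mono2) (auto simp: f_def)
  finally show ?thesis unfolding Dl_def by simp
qed

lemma Pl_eq_Dl:
  assumes "0 \<le> G" "G \<le> real (length L)"
    and srt: "\<And>a b. a \<le> b \<Longrightarrow> b < length L \<Longrightarrow> L ! b \<le> L ! a"
    and nn: "\<And>k. k < length L \<Longrightarrow> 0 \<le> L ! k"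
  shows "\<exists>t. 0 \<le> t \<and> t \<le> (\<Sum>k<length L. L ! k) \<and> Pl L G = Dl L G t"
  using range_cases[OF assms(1,2)]
proof
  assume "G = real (length L)"
  then show ?thesis unfolding Dl_def using nn Pl_N[of L]
    by (intro exI[of _ 0]) (auto intro: sum_nonneg)
next
  define f where "f = nat \<lfloor>G\<rfloor>"
  define r where "r = G - of_int \<lfloor>G\<rfloor>"
  assume f: "nat \<lfloor>G\<rfloor> < length L"
  then have fl: "f < length L" by (simp add: f_def)
  have Gfr: "G = real f + r" unfolding f_def r_def using assms by simp
  define t where "t = L ! f"
  have t0: "0 \<le> t" using nn fl t_def by simp
  have tM: "t \<le> (\<Sum>k<length L. L ! k)" unfolding t_def
    using fl nn by (intro member_le_sum) auto
  have "(\<Sum>k<length L. max 0 (L ! k - t)) = (\<Sum>k<f. max 0 (L ! k - t))"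
    using fl srt unfolding t_def
    by (intro sum.mono_neutral_right) auto
  also have "\<dots> = (\<Sum>k<f. L ! k - t)"
    using fl srt unfolding t_def by (intro sum.cong) auto
  also have "\<dots> = (\<Sum>k<f. L ! k) - real f * t" by (simp add: sum_subtractf)
  finally have "Dl L G t = (\<Sum>k<f. L ! k) + r * t"
    unfolding Dl_def Gfr by (simp add: algebra_simps)
  moreover have "Pl L G = (\<Sum>k<f. L ! k) + r * t"
    unfolding f_def r_def t_def using Pl_lt[OF assms(1) f] by simp
  ultimately show ?thesis using t0 tM by auto
qed


lemma Pl_mono:
  assumes "0 \<le> G1" "G1 \<le> G2" "G2 \<le> real (length L)"
    and srt: "\<And>a b. a \<le> b \<Longrightarrow> b < length L \<Longrightarrow> L ! b \<le> L ! a"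
    and nn: "\<And>k. k < length L \<Longrightarrow> 0 \<le> L ! k"
  shows "Pl L G1 \<le> Pl L G2"
proof -
  obtain t where t: "0 \<le> t" "Pl L G2 = Dl L G2 t"
    using Pl_eq_Dl[of G2 L, OF _ assms(3) srt nn] assms(1,2) by auto
  have "Pl L G1 \<le> Dl L G1 t" using assms by (intro Pl_le_Dl) auto
  also have "\<dots> \<le> Dl L G2 t" unfolding Dl_def using t(1) assms(2)
    by (simp add: mult_right_mono)
  finally show ?thesis using t by simp
qed

lemma Pl_lip:
  assumes srt: "\<And>a b. a \<le> b \<Longrightarrow> b < length L \<Longrightarrow> L ! b \<le> L ! a"
    and nn: "\<And>k. k < length L \<Longrightarrow> 0 \<le> L ! k"
  shows "(\<Sum>k<length L. L ! k)-lipschitz_on {0..real (length L)} (Pl L)"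
proof (rule lipschitz_onI)
  let ?M = "\<Sum>k<length L. L ! k"
  show "0 \<le> ?M" using nn by (auto intro: sum_nonneg)
  have one: "Pl L y - Pl L x \<le> ?M * \<bar>y - x\<bar>"
    if xy: "x \<in> {0..real (length L)}" "y \<in> {0..real (length L)}" for x y
  proof -
    obtain t where t: "0 \<le> t" "t \<le> ?M" "Pl L x = Dl L x t"
      using Pl_eq_Dl[of x L, OF _ _ srt nn] xy by auto
    have "Pl L y \<le> Dl L y t" using xy by (intro Pl_le_Dl) auto
    also have "\<dots> = Pl L x + (y - x) * t" using t(3) unfolding Dl_def by (simp add: algebra_simps)
    also have "(y - x) * t \<le> \<bar>y - x\<bar> * ?M"
      using t by (metis abs_ge_self abs_ge_zero mult_mono order_trans)
    finally show ?thesis by (simp add: mult.commute)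
  qed
  fix x y assume "x \<in> {0..real (length L)}" "y \<in> {0..real (length L)}"
  from one[OF this] one[OF this(2,1)]
  show "dist (Pl L x) (Pl L y) \<le> ?M * dist x y"
    by (simp add: dist_real_def abs_minus_commute)
qed

lemma Pl_root:
  assumes srt: "\<And>a b. a \<le> b \<Longrightarrow> b < length L \<Longrightarrow> L ! b \<le> L ! a"
    and nn: "\<And>k. k < length L \<Longrightarrow> 0 \<le> L ! k"
    and s: "0 \<le> s" "s \<le> (\<Sum>k<length L. L ! k)"
  shows "\<exists>G0. 0 \<le> G0 \<and> G0 \<le> real (length L) \<and> Pl L G0 = s"
  using IVT'[of "Pl L" 0 s "real (length L)", OF _ _ _ lipschitz_on_continuous_on[OF Pl_lip[OF srt nn]]]
    s by (simp add: Pl_0 Pl_N)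

lemma sv_props:
  fixes x :: "nat \<Rightarrow> real" and al :: "nat \<Rightarrow> nat \<Rightarrow> real" and Jset :: "nat \<Rightarrow> nat set"
  assumes fin: "finite J" and nnal: "\<forall>j\<in>J. 0 \<le> al i j" and JJ: "Jset i = J"
  defines "L \<equiv> sorted_vals Jset al i x"
  shows "length L = card J"
    and "\<And>k. k < length L \<Longrightarrow> 0 \<le> L ! k"
    and "\<And>a b. a \<le> b \<Longrightarrow> b < length L \<Longrightarrow> L ! b \<le> L ! a"
    and "\<And>g. (\<Sum>k<length L. g (L ! k)) = (\<Sum>j\<in>J. g (al i j * \<bar>x j\<bar>))"
proof -
  define xs where "xs = map (\<lambda>j. al i j * \<bar>x j\<bar>) (sorted_list_of_set J)"
  have L: "L = rev (sort xs)" unfolding L_def sorted_vals_def xs_def JJ by simp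
  show "length L = card J" unfolding L xs_def by simp
  have setL: "set L = (\<lambda>j. al i j * \<bar>x j\<bar>) ` J" unfolding L xs_def using fin by simp
  show "0 \<le> L ! k" if "k < length L" for k
  proof -
    have "L ! k \<in> set L" using that by simp
    then show ?thesis unfolding setL using nnal by auto
  qed
  show "L ! b \<le> L ! a" if "a \<le> b" "b < length L" for a b
  proof -
    have len: "length (sort xs) = length L" unfolding L by simp
    have "L ! b = sort xs ! (length L - Suc b)" "L ! a = sort xs ! (length L - Suc a)"
      using that unfolding L by (auto simp: rev_nth)
    moreover have "sort xs ! (length L - Suc b) \<le> sort xs ! (length L - Suc a)"
      using that len by (intro sorted_nth_mono) auto
    ultimately show ?thesis by simp
  qed
  show "(\<Sum>k<length L. g (L ! k)) = (\<Sum>j\<in>J. g (al i j * \<bar>x j\<bar>))" for g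
  proof -
    have "(\<Sum>k<length L. g (L ! k)) = sum_list (map g L)"
      by (simp add: sum_list_sum_nth atLeast0LessThan)
    also have "\<dots> = sum_list (map g xs)"
    proof -
      have "mset (map g L) = mset (map g xs)" unfolding L by simp
      then show ?thesis by (metis sum_mset_sum_list)
    qed
    also have "\<dots> = (\<Sum>j\<in>J. g (al i j * \<bar>x j\<bar>))"
      unfolding xs_def using fin by (simp add: sum_list_distinct_conv_sum_set)
    finally show ?thesis .
  qed
qed

theorem lemma2:
  fixes m n :: nat and a :: "nat \<Rightarrow> nat \<Rightarrow> real" and b :: "nat \<Rightarrow> real"
    and Jset :: "nat \<Rightarrow> nat set" and al :: "nat \<Rightarrow> nat \<Rightarrow> real" and xh :: "nat \<Rightarrow> real"
  assumes J_sub: "\<forall>i\<in>{1..m}. Jset i \<subseteq> {1..n}"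
    and al_nonneg: "\<forall>i\<in>{1..m}. \<forall>j\<in>Jset i. 0 \<le> al i j"
    and unique: "\<forall>i\<in>Ihat m n a b Jset al xh. \<forall>G::real. 0 \<le> G \<and> G \<le> real (card (Jset i)) \<and>
                   slack n a b xh i = protection Jset al i G xh \<longrightarrow> G = Gamma_low n a b Jset al xh i"
  shows "(\<forall>G u y z. feasible m n a b Jset al xh G u y z \<longrightarrow> G \<in> Theta m n a b Jset al xh) \<and>
         ((\<forall>i\<in>{1..m}. (\<Sum>j\<in>{1..n}. a i j * xh j) \<ge> b i) \<longrightarrow>
          (\<forall>G\<in>Theta m n a b Jset al xh. \<exists>u y z. feasible m n a b Jset al xh G u y z))"
proof -
  let ?s = "slack n a b xh"
  let ?L = "\<lambda>i. sorted_vals Jset al i xh"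
  let ?v = "\<lambda>i j. al i j * \<bar>xh j\<bar>"
  let ?Ih = "Ihat m n a b Jset al xh"
  let ?Gl = "Gamma_low n a b Jset al xh"
  have fin: "finite (Jset i)" if "i \<in> {1..m}" for i
    using J_sub that finite_subset by blast
  have len: "length (?L i) = card (Jset i)" if "i \<in> {1..m}" for i
    using sv_props(1)[where J="Jset i" and i=i and al=al and Jset=Jset and x=xh] fin[OF that] al_nonneg that by blast
  have nn: "\<And>k. k < length (?L i) \<Longrightarrow> 0 \<le> ?L i ! k" if "i \<in> {1..m}" for i
    using sv_props(2)[where J="Jset i" and i=i and al=al and Jset=Jset and x=xh] fin[OF that] al_nonneg that by blast
  have srt: "\<And>a b. a \<le> b \<Longrightarrow> b < length (?L i) \<Longrightarrow> ?L i ! b \<le> ?L i ! a" if "i \<in> {1..m}" for i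
    using sv_props(3)[where J="Jset i" and i=i and al=al and Jset=Jset and x=xh] fin[OF that] al_nonneg that by blast
  have sumc: "(\<Sum>k<length (?L i). g (?L i ! k)) = (\<Sum>j\<in>Jset i. g (?v i j))" if "i \<in> {1..m}" for i g
    using sv_props(4)[where J="Jset i" and i=i and al=al and Jset=Jset and x=xh] fin[OF that] al_nonneg that by blast
  have prot: "protection Jset al i G xh = Pl (?L i) G" for i G
    by (simp add: protection_def Pl_def Let_def)
  have Ih_sub: "?Ih \<subseteq> {1..m}" unfolding Ihat_def by auto
  have root: "\<exists>G0. 0 \<le> G0 \<and> G0 \<le> real (card (Jset i)) \<and> Pl (?L i) G0 = ?s i \<and> G0 = ?Gl i"
    if iI: "i \<in> ?Ih" for i
  proof -
    have i: "i \<in> {1..m}" using iI Ih_sub by auto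
    have s: "0 \<le> ?s i" "?s i \<le> (\<Sum>j\<in>Jset i. ?v i j)" using iI unfolding Ihat_def by auto
    have "(\<Sum>k<length (?L i). ?L i ! k) = (\<Sum>j\<in>Jset i. ?v i j)"
      using sumc[OF i, of "\<lambda>x. x"] by simp
    then obtain G0 where G0: "0 \<le> G0" "G0 \<le> real (card (Jset i))" "Pl (?L i) G0 = ?s i"
      using Pl_root[OF srt[OF i] nn[OF i], of "?s i"] s len[OF i] by auto
    then have "G0 = ?Gl i" using unique iI prot by metis
    then show ?thesis using G0 by auto
  qed
  have part1: "G \<in> Theta m n a b Jset al xh" if F: "feasible m n a b Jset al xh G u y z" for G u y z
  proof -
    have F1: "\<forall>i\<in>{1..m}. \<forall>j\<in>Jset i. al i j * xh j + u i j \<ge> 0 \<and> - al i j * xh j + u i j \<ge> 0"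
      and F2: "\<forall>i\<in>{1..m}. \<forall>j\<in>Jset i. y i j + z i \<ge> u i j"
      and F3: "\<forall>i\<in>{1..m}. (\<Sum>j\<in>{1..n}. a i j * xh j) - (\<Sum>j\<in>Jset i. y i j) - G i * z i \<ge> b i"
      and F4: "\<forall>i\<in>{1..m}. (\<forall>j\<in>Jset i. y i j \<ge> 0) \<and> z i \<ge> 0"
      and F5: "\<forall>i\<in>{1..m}. 0 \<le> G i \<and> G i \<le> real (card (Jset i))"
      using F unfolding feasible_def by auto
    have bnd: "Pl (?L i) (G i) \<le> ?s i" if i: "i \<in> {1..m}" for i
    proof -
      have "Pl (?L i) (G i) \<le> Dl (?L i) (G i) (z i)"
        using F5 i len[OF i] by (intro Pl_le_Dl) auto
      also have "\<dots> = G i * z i + (\<Sum>j\<in>Jset i. max 0 (?v i j - z i))"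
        unfolding Dl_def using sumc[OF i, of "\<lambda>x. max 0 (x - z i)"] by simp
      also have "(\<Sum>j\<in>Jset i. max 0 (?v i j - z i)) \<le> (\<Sum>j\<in>Jset i. y i j)"
      proof (rule sum_mono)
        fix j assume j: "j \<in> Jset i"
        have "?v i j = \<bar>al i j * xh j\<bar>" using al_nonneg i j by (simp add: abs_mult)
        also have "\<dots> \<le> u i j"
        proof -
          have h: "al i j * xh j + u i j \<ge> 0" "- al i j * xh j + u i j \<ge> 0" using F1 i j by auto
          then show ?thesis by (simp add: abs_le_iff)
        qed
        finally show "max 0 (?v i j - z i) \<le> y i j" using F2 F4 i j by force
      qed
      also have "G i * z i + (\<Sum>j\<in>Jset i. y i j) \<le> ?s i"
        using bspec[OF F3 i] unfolding slack_def by linarith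
      finally show ?thesis by simp
    qed
    show ?thesis unfolding Theta_def
    proof (intro CollectI conjI ballI)
      fix i assume iI: "i \<in> ?Ih"
      then have i: "i \<in> {1..m}" using Ih_sub by auto
      then show "0 \<le> G i" using F5 by auto
      obtain G0 where G0: "0 \<le> G0" "G0 \<le> real (card (Jset i))" "Pl (?L i) G0 = ?s i" "G0 = ?Gl i"
        using root[OF iI] by auto
      show "G i \<le> ?Gl i"
      proof (rule ccontr)
        assume "\<not> G i \<le> ?Gl i"
        then have lt: "G0 < G i" using G0 by simp
        have "Pl (?L i) G0 \<le> Pl (?L i) (G i)"
          using G0 lt F5 i len[OF i] by (intro Pl_mono[OF _ _ _ srt[OF i] nn[OF i]]) auto
        then have "Pl (?L i) (G i) = ?s i" using bnd[OF i] G0 by simp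
        then have "G i = ?Gl i" using unique iI prot F5 i by metis
        then show False using lt G0 by simp
      qed
    next
      fix i assume "i \<in> {1..m} - ?Ih"
      then show "0 \<le> G i" "G i \<le> real (card (Jset i))" using F5 by auto
    qed
  qed
  have part2: "\<exists>u y z. feasible m n a b Jset al xh G u y z"
    if S: "\<forall>i\<in>{1..m}. (\<Sum>j\<in>{1..n}. a i j * xh j) \<ge> b i" and T: "G \<in> Theta m n a b Jset al xh" for G
  proof -
    have GB: "0 \<le> G i \<and> G i \<le> real (card (Jset i)) \<and> Pl (?L i) (G i) \<le> ?s i" if i: "i \<in> {1..m}" for i
    proof (cases "i \<in> ?Ih")
      case True
      obtain G0 where G0: "0 \<le> G0" "G0 \<le> real (card (Jset i))" "Pl (?L i) G0 = ?s i" "G0 = ?Gl i"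
        using root[OF True] by auto
      have G: "0 \<le> G i" "G i \<le> G0" using T True G0 unfolding Theta_def by auto
      have "Pl (?L i) (G i) \<le> Pl (?L i) G0"
        using G0 G len[OF i] by (intro Pl_mono[OF _ _ _ srt[OF i] nn[OF i]]) auto
      then show ?thesis using G G0 by auto
    next
      case False
      have G: "0 \<le> G i" "G i \<le> real (card (Jset i))" using T False i unfolding Theta_def by auto
      have "?s i \<ge> 0" using S i unfolding slack_def by auto
      then have sv: "(\<Sum>j\<in>Jset i. ?v i j) < ?s i" using False i unfolding Ihat_def by auto
      have "Pl (?L i) (G i) \<le> Dl (?L i) (G i) 0"
        using G len[OF i] by (intro Pl_le_Dl) auto
      also have "\<dots> = (\<Sum>j\<in>Jset i. ?v i j)"
        unfolding Dl_def using sumc[OF i, of "\<lambda>x. max 0 (x - 0)"] al_nonneg i by (simp add: max_absorb2)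
      finally show ?thesis using G sv by simp
    qed
    have "\<forall>i\<in>{1..m}. \<exists>t. 0 \<le> t \<and> Pl (?L i) (G i) = Dl (?L i) (G i) t"
    proof
      fix i assume i: "i \<in> {1..m}"
      then show "\<exists>t. 0 \<le> t \<and> Pl (?L i) (G i) = Dl (?L i) (G i) t"
        using Pl_eq_Dl[OF _ _ srt[OF i] nn[OF i], of "G i"] GB[OF i] len[OF i] by auto
    qed
    then obtain zz where zz: "\<forall>i\<in>{1..m}. 0 \<le> zz i \<and> Pl (?L i) (G i) = Dl (?L i) (G i) (zz i)"
      by metis
    define yy where "yy = (\<lambda>i j. max 0 (?v i j - zz i))"
    have "feasible m n a b Jset al xh G ?v yy zz"
      unfolding feasible_def
    proof (intro conjI ballI)
      fix i j assume i: "i \<in> {1..m}" and j: "j \<in> Jset i"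
      have "al i j * xh j + ?v i j = al i j * (xh j + \<bar>xh j\<bar>)" by (simp add: algebra_simps)
      moreover have "0 \<le> al i j * (xh j + \<bar>xh j\<bar>)" using al_nonneg i j by simp
      ultimately show "al i j * xh j + ?v i j \<ge> 0" by simp
      have "- al i j * xh j + ?v i j = al i j * (\<bar>xh j\<bar> - xh j)" by (simp add: algebra_simps)
      moreover have "0 \<le> al i j * (\<bar>xh j\<bar> - xh j)" using al_nonneg i j by simp
      ultimately show "- al i j * xh j + ?v i j \<ge> 0" by simp
      show "yy i j + zz i \<ge> ?v i j" unfolding yy_def by simp
    next
      fix i assume i: "i \<in> {1..m}"
      have "(\<Sum>j\<in>Jset i. yy i j) + G i * zz i = Dl (?L i) (G i) (zz i)"
        unfolding Dl_def yy_def using sumc[OF i, of "\<lambda>x. max 0 (x - zz i)"] by simp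
      also have "\<dots> = Pl (?L i) (G i)" using zz i by simp
      also have "\<dots> \<le> ?s i" using GB[OF i] by simp
      finally show "(\<Sum>j\<in>{1..n}. a i j * xh j) - (\<Sum>j\<in>Jset i. yy i j) - G i * zz i \<ge> b i"
        unfolding slack_def by simp
    next
      fix i j show "yy i j \<ge> 0" unfolding yy_def by simp
    next
      fix i assume i: "i \<in> {1..m}"
      show "zz i \<ge> 0" using zz i by simp
    next
      fix i assume i: "i \<in> {1..m}"
      show "0 \<le> G i" using GB[OF i] by auto
    next
      fix i assume i: "i \<in> {1..m}"
      show "G i \<le> real (card (Jset i))" using GB[OF i] by auto
    qed
    then show ?thesis by blast
  qed
  show ?thesis using part1 part2 by blast
qed

end
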